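(* Consider an urn containing $N$ balls, $M \ge \frac{N}{2}$ of which are white while the others are black. The balls are drawn from the urn one by one uniformly at random without replacement until the urn is empty. Let $\ell$ be an integer with $8\log N \le \ell \le \frac{M}{432}$. If $M \ge 64$, then the probability that there exists some contiguous subsequence of at least $54\ell$ drawn balls containing $\ell$ or fewer white balls is at most $N^{-6}$.
   Context: $\log$ denotes the binary logarithm. *)

theory Defs
  imports "HOL-Probability.Probability" "HOL-Combinatorics.Permutations"
begin

text \<open>Balls are labelled 0..N-1; balls with label < M are white.
  A draw order is a permutation s of {..<N}: s k is the ball drawn at step k.
  Drawing uniformly without replacement until empty = uniform random permutation.\<close>

definition draw_orders :: "nat \<Rightarrow> (nat \<Rightarrow> nat) pmf" where
  "draw_orders N = pmf_of_set {s. s permutes {..<N}}"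

definition whites_in :: "nat \<Rightarrow> (nat \<Rightarrow> nat) \<Rightarrow> nat \<Rightarrow> nat \<Rightarrow> nat" where
  "whites_in M s i j = card {k \<in> {i..<j}. s k < M}"

definition sparse_window :: "nat \<Rightarrow> nat \<Rightarrow> nat \<Rightarrow> nat \<Rightarrow> (nat \<Rightarrow> nat) set" where
  "sparse_window N M L l =
     {s. \<exists>i j. i \<le> j \<and> j \<le> N \<and> j - i \<ge> L \<and> whites_in M s i j \<le> l}"

end

theory Submission
  imports Defs
begin

lemma choose_step: "(n choose Suc k) * Suc k = (n choose k) * (n - k)"
  by (metis binomial_absorb_comp binomial_absorption mult.commute)
lemma ratio:
  fixes b N t :: nat
  assumes "b \<le> N"
  shows "real (b choose t) * real N ^ t \<le> real (N choose t) * real b ^ t"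
proof (induction t)
  case 0 then show ?case by simp
next
  case (Suc t)
  have cb: "real (b choose Suc t) * (t+1) = real (b choose t) * real (b - t)"
    using choose_step[of b t] by (metis of_nat_Suc of_nat_mult Suc_eq_plus1 of_nat_add of_nat_1)
  have cN: "real (N choose Suc t) * (t+1) = real (N choose t) * real (N - t)"
    using choose_step[of N t] by (metis of_nat_Suc of_nat_mult Suc_eq_plus1 of_nat_add of_nat_1)
  have key: "real (b - t) * N \<le> real (N - t) * b"
  proof (cases "t \<le> b")
    case True
    then have "real (b - t) = real b - t" "real (N - t) = real N - t" using assms by auto
    moreover have "real b * t \<le> real N * t" using assms by (intro mult_right_mono) auto
    ultimately show ?thesis by (simp add: algebra_simps)
  next
    case False then show ?thesis by simp
  qed
  have "real (b choose Suc t) * real N ^ Suc t * (t+1) = (real (b choose Suc t) * (t+1)) * real N ^ Suc t"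
    by (simp add: algebra_simps)
  also have "\<dots> = (real (b choose t) * real (b - t)) * real N ^ Suc t" by (simp only: cb)
  also have "\<dots> = (real (b choose t) * real N ^ t) * (real (b - t) * N)"
    by (simp add: algebra_simps)
  also have "\<dots> \<le> (real (N choose t) * real b ^ t) * (real (b - t) * N)"
    using Suc.IH by (intro mult_right_mono) auto
  also have "\<dots> \<le> (real (N choose t) * real b ^ t) * (real (N - t) * b)"
    using key by (intro mult_left_mono) auto
  also have "\<dots> = (real (N choose t) * real (N - t)) * real b ^ Suc t"
    by (simp add: algebra_simps)
  also have "\<dots> = (real (N choose Suc t) * (t+1)) * real b ^ Suc t" by (simp only: cN)
  also have "\<dots> = real (N choose Suc t) * real b ^ Suc t * (t+1)"
    by (simp add: algebra_simps)
  finally show ?case by simp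
qed

lemma pow_le_exp_fact: "real k ^ k \<le> exp (real k) * fact k"
proof (induction k)
  case 0 then show ?case by simp
next
  case (Suc k)
  have a: "real (Suc k) ^ k \<le> exp 1 * real k ^ k"
  proof (cases "k = 0")
    case True then show ?thesis by simp
  next
    case False
    then have kp: "real k > 0" by simp
    have "1 + 1 / real k \<le> exp (1 / real k)" by (rule exp_ge_add_one_self)
    then have "(1 + 1 / real k) ^ k \<le> exp (1 / real k) ^ k" by (intro power_mono) (auto simp: kp)
    also have "\<dots> = exp 1" using kp by (simp add: exp_of_nat_mult[symmetric])
    finally have "(1 + 1 / real k) ^ k \<le> exp 1" .
    moreover have "(1 + 1 / real k) ^ k * real k ^ k = real (Suc k) ^ k"
      using kp by (simp add: power_mult_distrib[symmetric] field_simps)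
    ultimately show ?thesis using kp
      by (metis mult_right_mono zero_le_power of_nat_0_le_iff)
  qed
  have "real (Suc k) ^ Suc k = real (Suc k) * real (Suc k) ^ k" by simp
  also have "\<dots> \<le> real (Suc k) * (exp 1 * real k ^ k)" using a by (intro mult_left_mono) auto
  also have "\<dots> \<le> real (Suc k) * (exp 1 * (exp (real k) * fact k))"
    using Suc.IH by (intro mult_left_mono) auto
  also have "\<dots> = exp (real (Suc k)) * fact (Suc k)"
    by (simp add: exp_add[symmetric] algebra_simps)
  finally show ?case .
qed


lemma perm_exists:
  assumes "finite U" "T \<subseteq> U" "T' \<subseteq> U" "card T = card T'"
  shows "\<exists>\<tau>. \<tau> permutes U \<and> \<tau> ` T' = T"
proof -
  have fT: "finite T" "finite T'" using assms finite_subset by auto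
  obtain f where f: "bij_betw f T' T" using finite_same_card_bij[OF fT(2) fT(1)] assms(4) by metis
  have "card (U - T') = card (U - T)" using assms fT by (simp add: card_Diff_subset)
  then obtain g where g: "bij_betw g (U - T') (U - T)"
    using finite_same_card_bij[of "U - T'" "U - T"] assms(1) by auto
  define \<tau> where "\<tau> x = (if x \<in> T' then f x else if x \<in> U then g x else x)" for x
  have b1: "bij_betw \<tau> T' T" using f by (rule bij_betw_cong[THEN iffD1, rotated]) (simp add: \<tau>_def)
  have b2: "bij_betw \<tau> (U - T') (U - T)" using g by (rule bij_betw_cong[THEN iffD1, rotated]) (simp add: \<tau>_def)
  have "bij_betw \<tau> (T' \<union> (U - T')) (T \<union> (U - T))" by (rule bij_betw_combine[OF b1 b2]) auto
  moreover have "T' \<union> (U - T') = U" "T \<union> (U - T) = U" using assms by auto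
  ultimately have "bij_betw \<tau> U U" by simp
  then have "\<tau> permutes U" by (rule bij_imp_permutes) (use assms in \<open>auto simp: \<tau>_def\<close>)
  moreover have "\<tau> ` T' = T" using b1 by (simp add: bij_betw_def)
  ultimately show ?thesis by blast
qed

lemma sym_le:
  assumes "\<tau> permutes U" "\<tau> ` T' = T" "finite U"
  shows "card {s. s permutes U \<and> s ` T \<subseteq> B} \<le> card {s. s permutes U \<and> s ` T' \<subseteq> B}"
proof (rule card_inj_on_le[where f = "\<lambda>s. s \<circ> \<tau>"])
  show "inj_on (\<lambda>s. s \<circ> \<tau>) {s. s permutes U \<and> s ` T \<subseteq> B}"
  proof (rule inj_onI)
    fix s s' assume "s \<circ> \<tau> = s' \<circ> \<tau>"
    moreover have "surj \<tau>" using assms(1) permutes_surj by blast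
    ultimately show "s = s'"
    proof -
      assume h: "s \<circ> \<tau> = s' \<circ> \<tau>" and su: "surj \<tau>"
      show "s = s'"
      proof
        fix x
        obtain y where "x = \<tau> y" using su by (metis surjD)
        then show "s x = s' x" using h by (metis comp_apply)
      qed
    qed
  qed
  show "(\<lambda>s. s \<circ> \<tau>) ` {s. s permutes U \<and> s ` T \<subseteq> B} \<subseteq> {s. s permutes U \<and> s ` T' \<subseteq> B}"
  proof
    fix s' assume "s' \<in> (\<lambda>s. s \<circ> \<tau>) ` {s. s permutes U \<and> s ` T \<subseteq> B}"
    then obtain s where s: "s permutes U" "s ` T \<subseteq> B" "s' = s \<circ> \<tau>" by auto
    have "s \<circ> \<tau> permutes U" using permutes_compose[OF assms(1) s(1)] .
    moreover have "(s \<circ> \<tau>) ` T' = s ` T" using assms(2) by (metis image_comp)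
    ultimately show "s' \<in> {s. s permutes U \<and> s ` T' \<subseteq> B}" using s by simp
  qed
  show "finite {s. s permutes U \<and> s ` T' \<subseteq> B}" using finite_permutations[OF assms(3)] by simp
qed

lemma count_per_s:
  assumes "s permutes U" "finite U" "B \<subseteq> U"
  shows "card {T. T \<subseteq> U \<and> card T = t \<and> s ` T \<subseteq> B} = card B choose t"
proof -
  have "{T. T \<subseteq> U \<and> card T = t \<and> s ` T \<subseteq> B} = {T. T \<subseteq> U \<inter> s -` B \<and> card T = t}" by auto
  moreover have "card (U \<inter> s -` B) = card B"
  proof -
    have "s ` (U \<inter> s -` B) = B"
    proof
      show "s ` (U \<inter> s -` B) \<subseteq> B" by auto
      show "B \<subseteq> s ` (U \<inter> s -` B)"
      proof
        fix x assume "x \<in> B"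
        then have "x \<in> s ` U" using assms(3) permutes_image[OF assms(1)] by auto
        then obtain y where "y \<in> U" "x = s y" by auto
        then show "x \<in> s ` (U \<inter> s -` B)" using \<open>x \<in> B\<close> by auto
      qed
    qed
    moreover have "inj_on s (U \<inter> s -` B)" using permutes_inj_on[OF assms(1)] by (rule inj_on_subset) auto
    ultimately show ?thesis using card_image by metis
  qed
  ultimately show ?thesis using n_subsets[of "U \<inter> s -` B" t] assms(2) by simp
qed

lemma count_AT:
  assumes "finite U" "B \<subseteq> U" "T \<subseteq> U" "card T = t"
  shows "card {s. s permutes U \<and> s ` T \<subseteq> B} * (card U choose t) = fact (card U) * (card B choose t)"
proof -
  define P where "P = {s. s permutes U}"
  define A where "A T' = {s. s permutes U \<and> s ` T' \<subseteq> B}" for T'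
  define St where "St = {T'. T' \<subseteq> U \<and> card T' = t}"
  have finP: "finite P" using finite_permutations[OF assms(1)] by (simp add: P_def)
  have finSt: "finite St" using assms(1) by (simp add: St_def)
  have eq: "card (A T') = card (A T)" if "T' \<in> St" for T'
  proof -
    have T': "T' \<subseteq> U" "card T' = t" using that by (auto simp: St_def)
    obtain \<tau>1 where "\<tau>1 permutes U" "\<tau>1 ` T' = T" using perm_exists[of U T T'] T' assms by auto
    then have 1: "card (A T) \<le> card (A T')" unfolding A_def using sym_le assms(1) by blast
    obtain \<tau>2 where "\<tau>2 permutes U" "\<tau>2 ` T = T'" using perm_exists[of U T' T] T' assms by auto
    then have 2: "card (A T') \<le> card (A T)" unfolding A_def using sym_le assms(1) by blast
    from 1 2 show ?thesis by simp
  qed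
  have "(\<Sum>T'\<in>St. card (A T')) = card St * card (A T)" using eq by simp
  also have "card St = card U choose t" using n_subsets[OF assms(1)] by (simp add: St_def)
  finally have L: "(\<Sum>T'\<in>St. card (A T')) = (card U choose t) * card (A T)" .
  have "(\<Sum>T'\<in>St. card (A T')) = (\<Sum>T'\<in>St. \<Sum>s\<in>P. if s ` T' \<subseteq> B then 1 else 0)"
  proof (rule sum.cong[OF refl])
    fix T' show "card (A T') = (\<Sum>s\<in>P. if s ` T' \<subseteq> B then 1 else 0)"
      using finP by (simp add: sum.If_cases A_def P_def Int_def conj_commute)
  qed
  also have "\<dots> = (\<Sum>s\<in>P. \<Sum>T'\<in>St. if s ` T' \<subseteq> B then 1 else 0)" by (rule sum.swap)
  also have "\<dots> = (\<Sum>s\<in>P. card {T'. T' \<subseteq> U \<and> card T' = t \<and> s ` T' \<subseteq> B})"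
  proof (rule sum.cong[OF refl])
    fix s show "(\<Sum>T'\<in>St. if s ` T' \<subseteq> B then 1 else 0) = card {T'. T' \<subseteq> U \<and> card T' = t \<and> s ` T' \<subseteq> B}"
      using finSt by (simp add: sum.If_cases St_def Int_def conj_assoc)
  qed
  also have "\<dots> = (\<Sum>s\<in>P. card B choose t)"
    using count_per_s assms by (intro sum.cong) (auto simp: P_def)
  also have "\<dots> = fact (card U) * (card B choose t)"
    using card_permutations[OF refl assms(1)] by (simp add: P_def)
  finally show ?thesis using L by (simp add: A_def mult.commute)
qed

lemma binom_bound: "real (L choose l) \<le> real L ^ l / fact l" if "l \<le> L" for L l :: nat
proof -
  have e: "fact L = fact l * fact (L - l) * (L choose l)" using binomial_fact_lemma[OF that] by simp
  have "fact L div fact (L - l) = fact l * (L choose l)"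
    unfolding e by (simp add: mult.commute mult.left_commute)
  then have "fact l * (L choose l) \<le> L ^ l" using fact_div_fact_le_pow[OF that] by simp
  then have "real (fact l * (L choose l)) \<le> real (L ^ l)" by (rule of_nat_mono)
  then have "fact l * real (L choose l) \<le> real L ^ l" by simp
  then show ?thesis by (simp add: field_simps)
qed

theorem lemma3p2:
  fixes N M l :: nat
  assumes "M \<le> N"
    and "real M \<ge> real N / 2"
    and "M \<ge> 64"
    and "8 * log 2 (real N) \<le> real l"
    and "real l \<le> real M / 432"
  shows "measure_pmf.prob (draw_orders N) (sparse_window N M (54 * l) l) \<le> real N powr (-6)"
proof -
  define U where "U = {..<N}"
  define P where "P = {s. s permutes U}"
  define B where "B = {M..<N}"
  define L where "L = 54 * l"
  define t where "t = 53 * l"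
  define A where "A T = {s. s permutes U \<and> s ` T \<subseteq> B}" for T
  define I where "I = {i. i + L \<le> N}"
  define Ts where "Ts i = {T. T \<subseteq> {i..<i+L} \<and> card T = t}" for i
  have N64: "N \<ge> 64" using assms by simp
  have Npos: "real N > 0" using N64 by simp
  have "log 2 (real N) \<ge> log 2 64" using N64 by simp
  moreover have "log 2 (64::real) = 6"
  proof -
    have h: "log 2 (2 powr 6) = (6::real)" by (rule log_powr_cancel) auto
    then show ?thesis by simp
  qed
  ultimately have l1: "l \<ge> 1" using assms(4) by linarith
  have finU: "finite U" and cardU: "card U = N" by (auto simp: U_def)
  have finP: "finite P" using finite_permutations[OF finU] by (simp add: P_def)
  have cardP: "card P = fact N" using card_permutations[OF cardU finU] by (simp add: P_def)
  have Pne: "P \<noteq> {}" using cardP by auto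
  have BU: "B \<subseteq> U" and cardB: "card B = N - M" by (auto simp: B_def U_def)
  have LNt: "L - t = l" "t \<le> L" by (auto simp: L_def t_def)
  have IU: "I \<subseteq> U" using l1 by (auto simp: I_def U_def L_def)
  then have finI: "finite I" using finU finite_subset by auto
  have cardI: "card I \<le> N" using card_mono[OF finU IU] cardU by simp
  have finTs: "finite (Ts i)" for i by (simp add: Ts_def)
  have cardTs: "card (Ts i) = L choose t" for i
    using n_subsets[of "{i..<i+L}" t] by (simp add: Ts_def)
  have cover: "P \<inter> sparse_window N M (54 * l) l \<subseteq> (\<Union>i\<in>I. \<Union>T\<in>Ts i. A T)"
  proof
    fix s assume "s \<in> P \<inter> sparse_window N M (54 * l) l"
    then obtain i j where s: "s permutes U" and ij: "i \<le> j" "j \<le> N" "j - i \<ge> L" "whites_in M s i j \<le> l"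
      by (auto simp: P_def sparse_window_def L_def)
    have iI: "i \<in> I" using ij by (auto simp: I_def)
    define W where "W = {k \<in> {i..<i+L}. s k < M}"
    define Bl where "Bl = {k \<in> {i..<i+L}. \<not> s k < M}"
    have "W \<subseteq> {k \<in> {i..<j}. s k < M}" using ij by (auto simp: W_def)
    then have "card W \<le> whites_in M s i j" unfolding whites_in_def by (intro card_mono) auto
    then have cW: "card W \<le> l" using ij by simp
    have u: "{i..<i+L} = W \<union> Bl" and d: "W \<inter> Bl = {}" by (auto simp: W_def Bl_def)
    have fW: "finite W" "finite Bl" by (auto simp: W_def Bl_def)
    have "card (W \<union> Bl) = card W + card Bl" by (rule card_Un_disjoint[OF fW d])
    then have "L = card W + card Bl" using u by (metis card_atLeastLessThan add_diff_cancel_left')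
    then have "t \<le> card Bl" using cW LNt by linarith
    then obtain T where T: "T \<subseteq> Bl" "card T = t" by (rule obtain_subset_with_card_n)
    have "T \<in> Ts i" using T by (auto simp: Ts_def Bl_def)
    moreover have "s ` T \<subseteq> B"
    proof
      fix x assume "x \<in> s ` T"
      then obtain k where k: "k \<in> T" "x = s k" by auto
      then have "k \<in> U" "\<not> s k < M" using T ij by (auto simp: Bl_def U_def)
      then show "x \<in> B" using k permutes_in_image[OF s] by (auto simp: B_def U_def)
    qed
    then have "s \<in> A T" using s by (simp add: A_def)
    ultimately show "s \<in> (\<Union>i\<in>I. \<Union>T\<in>Ts i. A T)" using iI by blast
  qed
  have hb: "real (N - M) / real N \<le> 1 / 2" using assms(1,2) Npos by (simp add: of_nat_diff field_simps)
  have perT: "real (card (A T)) \<le> fact N * (1/2) ^ t" if "i \<in> I" "T \<in> Ts i" for i T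
  proof -
    have TU: "T \<subseteq> U" and cT: "card T = t" using that by (auto simp: I_def Ts_def U_def)
    have tN: "t \<le> N" using card_mono[OF finU TU] cT cardU by simp
    have c: "card (A T) * (N choose t) = fact N * ((N - M) choose t)"
      using count_AT[OF finU BU TU cT] cardU cardB by (simp add: A_def)
    have Cpos: "real (N choose t) > 0" using tN by simp
    have r: "real ((N - M) choose t) * real N ^ t \<le> real (N choose t) * real (N - M) ^ t"
      using ratio[of "N - M" N t] by simp
    have "real (card (A T)) = fact N * real ((N - M) choose t) / real (N choose t)"
      using Cpos arg_cong[OF c, of real] by (simp add: field_simps)
    also have "\<dots> \<le> fact N * (real (N - M) ^ t / real N ^ t)"
      using r Cpos Npos by (simp add: field_simps)
    also have "\<dots> = fact N * (real (N - M) / real N) ^ t" by (simp add: power_divide)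
    also have "\<dots> \<le> fact N * (1/2) ^ t"
      using hb by (intro mult_left_mono power_mono) auto
    finally show ?thesis .
  qed
  have "card (P \<inter> sparse_window N M (54 * l) l) \<le> card (\<Union>i\<in>I. \<Union>T\<in>Ts i. A T)"
    using cover finP by (intro card_mono) (auto simp: A_def P_def intro!: finite_subset[OF _ finP])
  also have "\<dots> \<le> (\<Sum>i\<in>I. card (\<Union>T\<in>Ts i. A T))" by (rule card_UN_le[OF finI])
  also have "\<dots> \<le> (\<Sum>i\<in>I. \<Sum>T\<in>Ts i. card (A T))"
    by (intro sum_mono card_UN_le finTs)
  finally have c0: "card (P \<inter> sparse_window N M (54 * l) l) \<le> (\<Sum>i\<in>I. \<Sum>T\<in>Ts i. card (A T))" .
  then have "real (card (P \<inter> sparse_window N M (54 * l) l)) \<le> real (\<Sum>i\<in>I. \<Sum>T\<in>Ts i. card (A T))"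
    by (rule of_nat_mono)
  also have "\<dots> = (\<Sum>i\<in>I. \<Sum>T\<in>Ts i. real (card (A T)))" by simp
  also have "\<dots> \<le> (\<Sum>i\<in>I. \<Sum>T\<in>Ts i. fact N * (1/2) ^ t)"
    using perT by (intro sum_mono) auto
  also have "\<dots> = real (card I) * (real (L choose t) * (fact N * (1/2) ^ t))"
    using cardTs by simp
  also have "\<dots> \<le> real N * (real (L choose t) * (fact N * (1/2) ^ t))"
    using cardI by (intro mult_right_mono) auto
  finally have c2: "real (card (P \<inter> sparse_window N M (54 * l) l)) / fact N \<le> real N * real (L choose t) * (1/2) ^ t"
    by (simp add: field_simps)
  have "L choose t = L choose l" using binomial_symmetric[OF LNt(2)] LNt(1) by simp
  then have "real (L choose t) \<le> real L ^ l / fact l" using binom_bound[of l L] by (simp add: L_def)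
  also have "\<dots> = 54 ^ l * (real l ^ l / fact l)" by (simp add: L_def power_mult_distrib)
  also have "\<dots> \<le> 54 ^ l * exp (real l)"
    using pow_le_exp_fact[of l] by (intro mult_left_mono) (auto simp: field_simps)
  also have "\<dots> = (54 * exp 1) ^ l" by (simp add: power_mult_distrib exp_of_nat_mult[symmetric])
  also have "\<dots> \<le> 2 ^ (8 * l)"
  proof -
    have "54 * exp 1 \<le> (256::real)" using exp_le by simp
    then have "(54 * exp 1) ^ l \<le> (256::real) ^ l" by (intro power_mono) auto
    also have "(256::real) ^ l = 2 ^ (8 * l)" by (simp add: power_mult)
    finally show ?thesis .
  qed
  finally have cb: "real (L choose t) \<le> 2 ^ (8 * l)" .
  have "real N * real (L choose t) * (1/2) ^ t \<le> real N * 2 ^ (8 * l) * (1/2) ^ (53 * l)"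
    using cb Npos by (simp add: t_def)
  also have "\<dots> = real N / 2 ^ (45 * l)"
  proof -
    have "(2::real) ^ (8 * l) * 2 ^ (45 * l) = 2 ^ (53 * l)" by (simp add: power_add[symmetric])
    then show ?thesis by (simp add: field_simps power_one_over)
  qed
  also have "\<dots> \<le> real N powr (-6)"
  proof -
    have e1: "(2 powr (log 2 (real N))) powr 7 = 2 powr (7 * log 2 (real N))"
      by (metis powr_powr mult.commute)
    have e2: "2 powr (log 2 (real N)) = real N" using Npos by simp
    have "real N powr 7 = 2 powr (7 * log 2 (real N))" using e1 e2 by metis
    also have "\<dots> \<le> 2 powr (45 * real l)" using assms(4) by (intro powr_mono) auto
    also have "\<dots> = 2 ^ (45 * l)" by (simp add: powr_realpow[symmetric])
    finally have h7: "real N powr 7 \<le> 2 ^ (45 * l)" .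
    have pa: "real N powr (-6) * real N powr 7 = real N powr (-6 + 7)" by (rule powr_add[symmetric])
    have "real N = real N powr (-6) * real N powr 7" unfolding pa using Npos by simp
    also have "\<dots> \<le> real N powr (-6) * 2 ^ (45 * l)" using h7 by (intro mult_left_mono) auto
    finally show ?thesis by (simp add: field_simps)
  qed
  finally have c3: "real (card (P \<inter> sparse_window N M (54 * l) l)) / fact N \<le> real N powr (-6)" using c2 by linarith
  have "measure_pmf.prob (draw_orders N) (sparse_window N M (54 * l) l) = real (card (P \<inter> sparse_window N M (54 * l) l)) / real (card P)"
    unfolding draw_orders_def U_def[symmetric] P_def[symmetric] using measure_pmf_of_set[OF Pne finP] by simp
  then show ?thesis using c3 cardP by simp
qed

end
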